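(* Let $(V,\langle\cdot,\cdot\rangle)$ be a pseudo-Euclidean real vector space of signature $(k,l)$ with $k\ge2$, $l\ge2$, and let $Z\subseteq V$ be a subspace with $q^+(Z)\ge1$. Then the following are equivalent: (i) $q^+(Z^\perp)=0$; (ii) every positive $(k-1)$-plane $H\subseteq V$ which is $Z$-extendable is also $Z$-orthogonally-extendable.
   Context: A pseudo-Euclidean space of signature $(k,l)$ is a finite-dimensional real vector space with a symmetric non-degenerate bilinear form whose Sylvester diagonal form has $k$ entries $+1$ and $l$ entries $-1$. For a subspace $L$, $q^+(L)$ denotes the number of $+1$'s in a diagonalization of the restriction of the form to $L$ (the maximal dimension of a positive definite subspace of $L$), and $L^\perp$ is the orthogonal complement. A positive $r$-plane is an $r$-dimensional subspace on which the form is positive definite. For a subspace $Z$ and a positive $(k-1)$-plane $H$: $H$ is $Z$-extendable if there is $z\in Z$ with $H+\mathbb{R}z$ a positive $k$-plane; $H$ is $Z$-orthogonally-extendable if there is $z\in Z\cap H^\perp$ with $H+\mathbb{R}z$ a positive $k$-plane. *)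

theory Defs
  imports "HOL-Analysis.Analysis"
begin

text \<open>A pseudo-Euclidean structure on a finite-dimensional real vector space 'a
 (modelled by a type of class euclidean_space; only its vector space structure
 is used): a symmetric non-degenerate bilinear form B of signature (k,l),
 i.e. admitting a B-orthogonal basis with k vectors of square +1 and l
 vectors of square -1 (Sylvester diagonal form).\<close>

definition sym_form :: "('a \<Rightarrow> 'a \<Rightarrow> real) \<Rightarrow> bool" where
  "sym_form B \<longleftrightarrow> (\<forall>x y. B x y = B y x)"

definition nondegenerate :: "('a::real_vector \<Rightarrow> 'a \<Rightarrow> real) \<Rightarrow> bool" where
  "nondegenerate B \<longleftrightarrow> (\<forall>x. (\<forall>y. B x y = 0) \<longrightarrow> x = 0)"

definition has_signature :: "('a::euclidean_space \<Rightarrow> 'a \<Rightarrow> real) \<Rightarrow> nat \<Rightarrow> nat \<Rightarrow> bool" where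
  "has_signature B k l \<longleftrightarrow>
     (\<exists>S. independent S \<and> span S = UNIV \<and>
          (\<forall>u\<in>S. \<forall>v\<in>S. u \<noteq> v \<longrightarrow> B u v = 0) \<and>
          (\<forall>v\<in>S. B v v = 1 \<or> B v v = -1) \<and>
          card {v\<in>S. B v v = 1} = k \<and> card {v\<in>S. B v v = -1} = l)"

definition pseudo_euclidean :: "('a::euclidean_space \<Rightarrow> 'a \<Rightarrow> real) \<Rightarrow> nat \<Rightarrow> nat \<Rightarrow> bool" where
  "pseudo_euclidean B k l \<longleftrightarrow> bilinear B \<and> sym_form B \<and> nondegenerate B \<and> has_signature B k l"

definition pos_def_on :: "('a::real_vector \<Rightarrow> 'a \<Rightarrow> real) \<Rightarrow> 'a set \<Rightarrow> bool" where
  "pos_def_on B L \<longleftrightarrow> (\<forall>x\<in>L. x \<noteq> 0 \<longrightarrow> B x x > 0)"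

definition q_plus :: "('a::euclidean_space \<Rightarrow> 'a \<Rightarrow> real) \<Rightarrow> 'a set \<Rightarrow> nat" where
  "q_plus B L = Max {dim W | W. subspace W \<and> W \<subseteq> L \<and> pos_def_on B W}"

definition orth_compl :: "('a \<Rightarrow> 'a \<Rightarrow> real) \<Rightarrow> 'a set \<Rightarrow> 'a set" where
  "orth_compl B Z = {v. \<forall>z\<in>Z. B v z = 0}"

definition positive_plane :: "('a::euclidean_space \<Rightarrow> 'a \<Rightarrow> real) \<Rightarrow> nat \<Rightarrow> 'a set \<Rightarrow> bool" where
  "positive_plane B r H \<longleftrightarrow> subspace H \<and> dim H = r \<and> pos_def_on B H"

definition line_ext :: "'a::real_vector set \<Rightarrow> 'a \<Rightarrow> 'a set" where
  "line_ext H z = {h + c *\<^sub>R z | h c. h \<in> H}"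

definition Z_extendable :: "('a::euclidean_space \<Rightarrow> 'a \<Rightarrow> real) \<Rightarrow> nat \<Rightarrow> 'a set \<Rightarrow> 'a set \<Rightarrow> bool" where
  "Z_extendable B k Z H \<longleftrightarrow> (\<exists>z\<in>Z. positive_plane B k (line_ext H z))"

definition Z_orth_extendable :: "('a::euclidean_space \<Rightarrow> 'a \<Rightarrow> real) \<Rightarrow> nat \<Rightarrow> 'a set \<Rightarrow> 'a set \<Rightarrow> bool" where
  "Z_orth_extendable B k Z H \<longleftrightarrow> (\<exists>z\<in>Z \<inter> orth_compl B H. positive_plane B k (line_ext H z))"

end

theory Submission
  imports Defs
begin

lemma diag_form:
  fixes B :: "'a::real_vector \<Rightarrow> 'a \<Rightarrow> real"
  assumes B: "bilinear B" and fin: "finite T"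
    and orth: "\<forall>u\<in>T. \<forall>v\<in>T. u \<noteq> v \<longrightarrow> B u v = 0"
  shows "B (\<Sum>v\<in>T. c v *\<^sub>R v) (\<Sum>v\<in>T. c v *\<^sub>R v) = (\<Sum>v\<in>T. (c v)^2 * B v v)"
proof -
  have "B (\<Sum>v\<in>T. c v *\<^sub>R v) (\<Sum>v\<in>T. c v *\<^sub>R v)
      = (\<Sum>(i,j)\<in>T\<times>T. B (c i *\<^sub>R i) (c j *\<^sub>R j))"
    by (rule bilinear_sum[OF B])
  also have "\<dots> = (\<Sum>i\<in>T. \<Sum>j\<in>T. c i * c j * B i j)"
    by (simp add: sum.cartesian_product bilinear_lmul[OF B] bilinear_rmul[OF B] mult_ac)
  also have "\<dots> = (\<Sum>i\<in>T. c i * c i * B i i)"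
  proof (rule sum.cong[OF refl])
    fix i assume i: "i \<in> T"
    show "(\<Sum>j\<in>T. c i * c j * B i j) = c i * c i * B i i"
    proof -
      have "\<forall>j\<in>T-{i}. c i * c j * B i j = 0" using orth i by auto
      then show ?thesis by (subst sum.remove[OF fin i]) (auto intro!: sum.neutral)
    qed
  qed
  finally show ?thesis by (simp add: power2_eq_square)
qed


lemma diag_pos:
  fixes B :: "'a::real_vector \<Rightarrow> 'a \<Rightarrow> real" and s :: real
  assumes B: "bilinear B" and fin: "finite T"
    and orth: "\<forall>u\<in>T. \<forall>v\<in>T. u \<noteq> v \<longrightarrow> B u v = 0"
    and d: "\<forall>v\<in>T. B v v = s" and s: "s \<noteq> 0"
    and x: "x \<in> span T" "x \<noteq> 0"
  shows "s * B x x > 0"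
proof -
  obtain c where xc: "x = (\<Sum>v\<in>T. c v *\<^sub>R v)" using x(1) span_finite[OF fin] by auto
  have "B x x = (\<Sum>v\<in>T. (c v)^2 * s)" unfolding xc diag_form[OF B fin orth] using d by simp
  then have e: "s * B x x = (\<Sum>v\<in>T. (c v)^2 * s^2)" by (simp add: sum_distrib_left mult_ac power2_eq_square)
  obtain v where v: "v \<in> T" "c v \<noteq> 0"
  proof (rule ccontr)
    assume "\<not> thesis" with that have "\<forall>v\<in>T. c v = 0" by blast
    then have "x = 0" unfolding xc by simp
    with x(2) show False by simp
  qed
  have "0 < (\<Sum>v\<in>T. (c v)^2 * s^2)"
    by (rule sum_pos2[OF fin v(1)]) (use v s in auto)
  with e show ?thesis by simp
qed

lemma sig_spaces:
  fixes B :: "'a::euclidean_space \<Rightarrow> 'a \<Rightarrow> real"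
  assumes "pseudo_euclidean B k l"
  obtains Ep En where "subspace Ep" "subspace En" "dim Ep = k" "dim En = l"
   "\<forall>x\<in>Ep. x \<noteq> 0 \<longrightarrow> B x x > 0" "\<forall>x\<in>En. x \<noteq> 0 \<longrightarrow> B x x < 0" "k + l = DIM('a)"
proof -
  have B: "bilinear B" using assms unfolding pseudo_euclidean_def by auto
  obtain S where ind: "independent S" and sp: "span S = UNIV"
    and orth: "\<forall>u\<in>S. \<forall>v\<in>S. u \<noteq> v \<longrightarrow> B u v = 0"
    and pm: "\<forall>v\<in>S. B v v = 1 \<or> B v v = -1"
    and ck: "card {v\<in>S. B v v = 1} = k" and cl: "card {v\<in>S. B v v = -1} = l"
    using assms unfolding pseudo_euclidean_def has_signature_def by blast
  have fin: "finite S" using ind finiteI_independent by blast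
  define Sp where "Sp = {v\<in>S. B v v = 1}"
  define Sn where "Sn = {v\<in>S. B v v = -1}"
  have indp: "independent Sp" "independent Sn"
    using independent_mono[OF ind, of Sp] independent_mono[OF ind, of Sn]
    unfolding Sp_def Sn_def by auto
  have finp: "finite Sp" "finite Sn" using fin unfolding Sp_def Sn_def by auto
  have "S = Sp \<union> Sn" "Sp \<inter> Sn = {}" using pm unfolding Sp_def Sn_def by auto
  then have "card S = k + l" using finp ck cl unfolding Sp_def[symmetric] Sn_def[symmetric]
    by (simp add: card_Un_disjoint)
  moreover have "card S = DIM('a)"
    using dim_span_eq_card_independent[OF ind] sp dim_UNIV by simp
  ultimately have kl: "k + l = DIM('a)" by simp
  show ?thesis
  proof (rule that[of "span Sp" "span Sn"])
    show "dim (span Sp) = k" using dim_span_eq_card_independent[OF indp(1)] ck Sp_def by simp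
    show "dim (span Sn) = l" using dim_span_eq_card_independent[OF indp(2)] cl Sn_def by simp
    show "\<forall>x\<in>span Sp. x \<noteq> 0 \<longrightarrow> 0 < B x x"
    proof (intro ballI impI)
      fix x assume "x \<in> span Sp" "x \<noteq> 0"
      moreover have "\<forall>u\<in>Sp. \<forall>v\<in>Sp. u \<noteq> v \<longrightarrow> B u v = 0" using orth Sp_def by auto
      moreover have "\<forall>v\<in>Sp. B v v = 1" using Sp_def by auto
      ultimately show "0 < B x x" using diag_pos[OF B finp(1), of 1 x] by simp
    qed
    show "\<forall>x\<in>span Sn. x \<noteq> 0 \<longrightarrow> B x x < 0"
    proof (intro ballI impI)
      fix x assume "x \<in> span Sn" "x \<noteq> 0"
      moreover have "\<forall>u\<in>Sn. \<forall>v\<in>Sn. u \<noteq> v \<longrightarrow> B u v = 0" using orth Sn_def by auto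
      moreover have "\<forall>v\<in>Sn. B v v = -1" using Sn_def by auto
      ultimately have "-1 * B x x > 0" using diag_pos[OF B finp(2), of "-1" x] by simp
      then show "B x x < 0" by simp
    qed
  qed (auto simp: kl)
qed

lemma bil_facts:
  fixes B :: "'a::real_vector \<Rightarrow> 'a \<Rightarrow> real"
  assumes "bilinear B"
  shows "B (x + y) z = B x z + B y z" "B z (x + y) = B z x + B z y"
    "B (c *\<^sub>R x) z = c * B x z" "B z (c *\<^sub>R x) = c * B z x"
    "B (x - y) z = B x z - B y z" "B z (x - y) = B z x - B z y"
    "B 0 z = 0" "B z 0 = 0"
  using assms
  by (simp_all add: bilinear_ladd bilinear_radd bilinear_lmul bilinear_rmul
      bilinear_lsub bilinear_rsub bilinear_lzero bilinear_rzero)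

lemma subspace_orth_set:
  fixes B :: "'a::real_vector \<Rightarrow> 'a \<Rightarrow> real"
  assumes "bilinear B"
  shows "subspace {x. \<forall>t\<in>T. B x t = 0}"
  unfolding subspace_def using bil_facts[OF assms] by auto

lemma subspace_orth_compl:
  fixes B :: "'a::real_vector \<Rightarrow> 'a \<Rightarrow> real"
  assumes "bilinear B"
  shows "subspace (orth_compl B X)"
  unfolding orth_compl_def by (rule subspace_orth_set[OF assms])

lemma line_ext_span:
  assumes "subspace H"
  shows "line_ext H z = span (insert z H)"
proof -
  have "span H = H" using assms by simp
  show ?thesis
  proof (rule set_eqI)
    fix x
    show "x \<in> line_ext H z \<longleftrightarrow> x \<in> span (insert z H)"
      unfolding line_ext_def span_insert \<open>span H = H\<close>
    proof
      assume "x \<in> {h + c *\<^sub>R z |h c. h \<in> H}"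
      then obtain h c where "x = h + c *\<^sub>R z" "h \<in> H" by auto
      then have "x - c *\<^sub>R z \<in> H" by simp
      then show "x \<in> {x. \<exists>k. x - k *\<^sub>R z \<in> H}" by auto
    next
      assume "x \<in> {x. \<exists>k. x - k *\<^sub>R z \<in> H}"
      then obtain c where "x - c *\<^sub>R z \<in> H" by auto
      moreover have "x = (x - c *\<^sub>R z) + c *\<^sub>R z" by simp
      ultimately show "x \<in> {h + c *\<^sub>R z |h c. h \<in> H}" by blast
    qed
  qed
qed

lemma line_ext_props:
  fixes H :: "'a::euclidean_space set"
  assumes "subspace H"
  shows "subspace (line_ext H z)" "H \<subseteq> line_ext H z" "z \<in> line_ext H z"
    "dim (line_ext H z) = (if z \<in> H then dim H else dim H + 1)"
proof -
  have "span H = H" using assms by simp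
  then show "subspace (line_ext H z)" "H \<subseteq> line_ext H z" "z \<in> line_ext H z"
    "dim (line_ext H z) = (if z \<in> H then dim H else dim H + 1)"
  proof -
    have e: "z \<in> span H \<longleftrightarrow> z \<in> H" using \<open>span H = H\<close> by (simp only:)
    show "subspace (line_ext H z)" "H \<subseteq> line_ext H z" "z \<in> line_ext H z"
      using assms by (auto simp: line_ext_span intro: span_base)
    show "dim (line_ext H z) = (if z \<in> H then dim H else dim H + 1)"
      using assms dim_insert[of z H] e unfolding line_ext_span[OF assms] dim_span by simp
  qed
qed

lemma line_ext_subset:
  assumes "subspace H" "subspace P" "H \<subseteq> P" "z \<in> P"
  shows "line_ext H z \<subseteq> P"
  using assms unfolding line_ext_def by (auto intro!: subspace_add subspace_mul)

lemma pos_ext: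
  fixes B :: "'a::euclidean_space \<Rightarrow> 'a \<Rightarrow> real"
  assumes B: "bilinear B" and sym: "sym_form B" and H: "subspace H" and pH: "pos_def_on B H"
    and orth: "\<forall>h\<in>H. B x h = 0" and xx: "B x x > 0"
  shows "positive_plane B (dim H + 1) (line_ext H x)"
proof -
  have xH: "x \<notin> H" using orth xx by force
  have pd: "pos_def_on B (line_ext H x)"
    unfolding pos_def_on_def
  proof
    fix y assume "y \<in> line_ext H x"
    then obtain h c where y: "y = h + c *\<^sub>R x" "h \<in> H" unfolding line_ext_def by auto
    have hx: "B h x = 0" "B x h = 0" using orth y(2) sym unfolding sym_form_def by auto
    have e: "B y y = B h h + c * c * B x x"
      unfolding y using hx by (simp add: bil_facts[OF B])
    have hh: "B h h \<ge> 0" using pH y(2) unfolding pos_def_on_def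
      by (cases "h = 0") (auto simp: bil_facts[OF B] less_imp_le)
    show "y \<noteq> 0 \<longrightarrow> 0 < B y y"
    proof
      assume "y \<noteq> 0"
      show "0 < B y y"
      proof (cases "c = 0")
        case True
        then have "h \<noteq> 0" using \<open>y \<noteq> 0\<close> y by auto
        then show ?thesis using e True pH y(2) unfolding pos_def_on_def by auto
      next
        case False
        then have "c * c > 0" by (auto simp: zero_less_mult_iff linorder_neq_iff)
        then have "c * c * B x x > 0" using xx by (simp add: mult_pos_pos)
        then show ?thesis using e hh by linarith
      qed
    qed
  qed
  show ?thesis unfolding positive_plane_def using line_ext_props[OF H, of x] xH pd by auto
qed

lemma hyperplane_dim:
  fixes \<phi> :: "'a::euclidean_space \<Rightarrow> real"
  assumes W: "subspace W" and lin: "linear \<phi>"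
  shows "dim W \<le> dim (W \<inter> {x. \<phi> x = 0}) + 1"
proof (cases "\<forall>w\<in>W. \<phi> w = 0")
  case True
  then have "W \<inter> {x. \<phi> x = 0} = W" by auto
  then show ?thesis by simp
next
  case False
  then obtain w0 where w0: "w0 \<in> W" "\<phi> w0 \<noteq> 0" by auto
  define K where "K = W \<inter> {x. \<phi> x = 0}"
  have sK: "subspace K" unfolding K_def
    by (rule subspace_inter[OF W]) (use lin in \<open>auto simp: subspace_def linear_add linear_scale linear_0\<close>)
  have "W \<subseteq> span (insert w0 K)"
  proof
    fix x assume x: "x \<in> W"
    have "x - (\<phi> x / \<phi> w0) *\<^sub>R w0 \<in> K"
      unfolding K_def using x w0 W lin
      by (auto simp: linear_diff linear_scale subspace_diff subspace_mul)
    moreover have "span K = K" using sK by simp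
    ultimately show "x \<in> span (insert w0 K)" unfolding span_insert by (auto intro: span_base)
  qed
  then have "dim W \<le> dim (insert w0 K)"
    by (metis dim_span dim_subset)
  also have "\<dots> \<le> dim K + 1" by (simp add: dim_insert)
  finally show ?thesis unfolding K_def .
qed

lemma orth_dim:
  fixes B :: "'a::euclidean_space \<Rightarrow> 'a \<Rightarrow> real"
  assumes B: "bilinear B" and fin: "finite T"
  shows "subspace Y \<Longrightarrow> dim Y \<le> dim (Y \<inter> {x. \<forall>t\<in>T. B x t = 0}) + card T"
  using fin
proof (induction T rule: finite_induct)
  case empty
  then show ?case by simp
next
  case (insert a T)
  let ?W = "Y \<inter> {x. \<forall>t\<in>T. B x t = 0}"
  have sW: "subspace ?W" by (rule subspace_inter[OF insert.prems subspace_orth_set[OF B]])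
  have lin: "linear (\<lambda>x. B x a)" using B unfolding bilinear_def by auto
  have "dim ?W \<le> dim (?W \<inter> {x. B x a = 0}) + 1" by (rule hyperplane_dim[OF sW lin])
  moreover have "?W \<inter> {x. B x a = 0} = Y \<inter> {x. \<forall>t\<in>insert a T. B x t = 0}" by auto
  ultimately show ?case using insert by simp
qed

lemma orth_compl_dim:
  fixes B :: "'a::euclidean_space \<Rightarrow> 'a \<Rightarrow> real"
  assumes B: "bilinear B" and X: "subspace X" and Y: "subspace Y"
  shows "dim Y \<le> dim (Y \<inter> orth_compl B X) + dim X"
proof -
  obtain T where T: "T \<subseteq> X" "independent T" "X \<subseteq> span T" "card T = dim X"
    using basis_exists by blast
  have fin: "finite T" using T(2) finiteI_independent by blast
  have sub: "{x. \<forall>t\<in>T. B x t = 0} \<subseteq> orth_compl B X"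
  proof
    fix x assume x: "x \<in> {x. \<forall>t\<in>T. B x t = 0}"
    have "subspace {y. B x y = 0}" unfolding subspace_def using bil_facts[OF B] by auto
    then have "span T \<subseteq> {y. B x y = 0}" using x by (intro span_minimal) auto
    then show "x \<in> orth_compl B X" using T(3) unfolding orth_compl_def by auto
  qed
  have "dim Y \<le> dim (Y \<inter> {x. \<forall>t\<in>T. B x t = 0}) + card T" by (rule orth_dim[OF B fin Y])
  also have "dim (Y \<inter> {x. \<forall>t\<in>T. B x t = 0}) \<le> dim (Y \<inter> orth_compl B X)"
    using sub by (intro dim_subset) auto
  finally show ?thesis using T(4) by simp
qed

lemma disj_dim:
  fixes A C :: "'a::euclidean_space set"
  assumes "subspace A" "subspace C" "A \<inter> C \<subseteq> {0}"
  shows "dim A + dim C \<le> DIM('a)"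
proof -
  have "dim (A \<inter> C) = 0" using assms(3) by simp
  then show ?thesis
    using dim_sums_Int[OF assms(1,2)] dim_subset_UNIV[of "{x + y |x y. x \<in> A \<and> y \<in> C}"]
    by linarith
qed

lemma nonpos_dim:
  fixes B :: "'a::euclidean_space \<Rightarrow> 'a \<Rightarrow> real"
  assumes pe: "pseudo_euclidean B k l" and Y: "subspace Y" and np: "\<forall>y\<in>Y. B y y \<le> 0"
  shows "dim Y \<le> l"
proof -
  obtain Ep En where E: "subspace Ep" "subspace En" "dim Ep = k" "dim En = l"
   "\<forall>x\<in>Ep. x \<noteq> 0 \<longrightarrow> B x x > 0" "\<forall>x\<in>En. x \<noteq> 0 \<longrightarrow> B x x < 0" "k + l = DIM('a)"
    using sig_spaces[OF pe] by blast
  have "Y \<inter> Ep \<subseteq> {0}" using np E(5) by force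
  then have "dim Y + dim Ep \<le> DIM('a)" by (rule disj_dim[OF Y E(1)])
  then show ?thesis using E by simp
qed

lemma nonneg_dim:
  fixes B :: "'a::euclidean_space \<Rightarrow> 'a \<Rightarrow> real"
  assumes pe: "pseudo_euclidean B k l" and Y: "subspace Y" and np: "\<forall>y\<in>Y. B y y \<ge> 0"
  shows "dim Y \<le> k"
proof -
  obtain Ep En where E: "subspace Ep" "subspace En" "dim Ep = k" "dim En = l"
   "\<forall>x\<in>Ep. x \<noteq> 0 \<longrightarrow> B x x > 0" "\<forall>x\<in>En. x \<noteq> 0 \<longrightarrow> B x x < 0" "k + l = DIM('a)"
    using sig_spaces[OF pe] by blast
  have "Y \<inter> En \<subseteq> {0}" using np E(6) by force
  then have "dim Y + dim En \<le> DIM('a)" by (rule disj_dim[OF Y E(2)])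
  then show ?thesis using E by simp
qed

lemma qp_fin:
  fixes B :: "'a::euclidean_space \<Rightarrow> 'a \<Rightarrow> real"
  shows "finite {dim W |W. subspace W \<and> W \<subseteq> L \<and> pos_def_on B W}"
  by (rule finite_subset[of _ "{..DIM('a)}"]) (auto simp: dim_subset_UNIV)

lemma qp_ge:
  fixes B :: "'a::euclidean_space \<Rightarrow> 'a \<Rightarrow> real"
  assumes "subspace W" "W \<subseteq> L" "pos_def_on B W"
  shows "dim W \<le> q_plus B L"
  unfolding q_plus_def using assms by (intro Max_ge[OF qp_fin]) auto

lemma qp_wit:
  fixes B :: "'a::euclidean_space \<Rightarrow> 'a \<Rightarrow> real"
  assumes "subspace L"
  obtains W where "subspace W" "W \<subseteq> L" "pos_def_on B W" "dim W = q_plus B L"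
proof -
  have "{0} \<subseteq> L" using subspace_0[OF assms] by auto
  then have ne: "{dim W |W. subspace W \<and> W \<subseteq> L \<and> pos_def_on B W} \<noteq> {}"
    by (auto simp: pos_def_on_def intro!: exI[of _ "{0}"])
  show ?thesis using Max_in[OF qp_fin ne] that unfolding q_plus_def by auto
qed

lemma qp_zero_iff:
  fixes B :: "'a::euclidean_space \<Rightarrow> 'a \<Rightarrow> real"
  assumes B: "bilinear B" and sym: "sym_form B" and L: "subspace L"
  shows "q_plus B L = 0 \<longleftrightarrow> (\<forall>x\<in>L. \<not> B x x > 0)"
proof
  assume q: "q_plus B L = 0"
  show "\<forall>x\<in>L. \<not> B x x > 0"
  proof (intro ballI notI)
    fix x assume x: "x \<in> L" "B x x > 0"
    have "positive_plane B (dim {0::'a} + 1) (line_ext {0} x)"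
      by (rule pos_ext[OF B sym]) (use x in \<open>auto simp: pos_def_on_def bil_facts[OF B]\<close>)
    moreover have "line_ext {0} x \<subseteq> L" by (rule line_ext_subset) (use L x subspace_0[OF L] in auto)
    ultimately have "1 \<le> q_plus B L" using qp_ge unfolding positive_plane_def by fastforce
    with q show False by simp
  qed
next
  assume h: "\<forall>x\<in>L. \<not> B x x > 0"
  obtain W where W: "subspace W" "W \<subseteq> L" "pos_def_on B W" "dim W = q_plus B L"
    using qp_wit[OF L] by blast
  have "W \<subseteq> {0}" using W h unfolding pos_def_on_def by auto
  then have "dim W = 0" using dim_eq_0 by blast
  then show "q_plus B L = 0" using W(4) by simp
qed

lemma extend_aux:
  fixes B :: "'a::euclidean_space \<Rightarrow> 'a \<Rightarrow> real"
  assumes pe: "pseudo_euclidean B k l"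
  shows "\<forall>Q. subspace Q \<and> pos_def_on B Q \<and> k - dim Q = m \<longrightarrow>
           (\<exists>P. subspace P \<and> pos_def_on B P \<and> Q \<subseteq> P \<and> dim P = k)"
proof (induction m)
  have B: "bilinear B" using pe unfolding pseudo_euclidean_def by auto
  case 0
  show ?case
  proof (intro allI impI)
    fix Q assume Q: "subspace Q \<and> pos_def_on B Q \<and> k - dim Q = 0"
    have "\<forall>y\<in>Q. B y y \<ge> 0" using Q unfolding pos_def_on_def
      by (metis bil_facts(7)[OF B] less_imp_le order_refl)
    then have "dim Q \<le> k" using nonneg_dim[OF pe] Q by blast
    then show "\<exists>P. subspace P \<and> pos_def_on B P \<and> Q \<subseteq> P \<and> dim P = k" using Q by auto
  qed
next
  case (Suc m)
  have B: "bilinear B" and sym: "sym_form B" using pe unfolding pseudo_euclidean_def by auto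
  obtain Ep En where E: "k + l = DIM('a)"
    using sig_spaces[OF pe] by blast
  show ?case
  proof (intro allI impI)
    fix Q assume Q: "subspace Q \<and> pos_def_on B Q \<and> k - dim Q = Suc m"
    have "dim (UNIV::'a set) \<le> dim (UNIV \<inter> orth_compl B Q) + dim Q"
      by (rule orth_compl_dim[OF B]) (use Q in auto)
    moreover have "k - dim Q = Suc m" using Q by simp
    ultimately have "dim (orth_compl B Q) > l" using E by simp
    then obtain v where v: "v \<in> orth_compl B Q" "B v v > 0"
      using nonpos_dim[OF pe subspace_orth_compl[OF B, of Q]] by force
    have "positive_plane B (dim Q + 1) (line_ext Q v)"
      by (rule pos_ext[OF B sym]) (use Q v in \<open>auto simp: orth_compl_def\<close>)
    then have "subspace (line_ext Q v) \<and> pos_def_on B (line_ext Q v) \<and> k - dim (line_ext Q v) = m"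
      using Q unfolding positive_plane_def by auto
    then obtain P where "subspace P \<and> pos_def_on B P \<and> line_ext Q v \<subseteq> P \<and> dim P = k"
      using Suc.IH by blast
    moreover have "Q \<subseteq> line_ext Q v" using line_ext_props(2) Q by blast
    ultimately show "\<exists>P. subspace P \<and> pos_def_on B P \<and> Q \<subseteq> P \<and> dim P = k" by blast
  qed
qed

theorem proposition2:
  fixes B :: "'a::euclidean_space \<Rightarrow> 'a \<Rightarrow> real" and k l :: nat and Z :: "'a set"
  assumes "pseudo_euclidean B k l"
    and "k \<ge> 2" and "l \<ge> 2"
    and "subspace Z" and "q_plus B Z \<ge> 1"
  shows "q_plus B (orth_compl B Z) = 0 \<longleftrightarrow>
         (\<forall>H. positive_plane B (k - 1) H \<and> Z_extendable B k Z H \<longrightarrow> Z_orth_extendable B k Z H)"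
proof -
  note pe = assms(1) and k2 = assms(2) and sZ = assms(4) and qZ = assms(5)
  have B: "bilinear B" and sym: "sym_form B" using pe unfolding pseudo_euclidean_def by auto
  have symB: "\<And>x y. B x y = B y x" using sym unfolding sym_form_def by auto
  note bf = bil_facts[OF B]
  obtain Ep En where kl: "k + l = DIM('a)" using sig_spaces[OF pe] by blast
  define C where "C = orth_compl B Z"
  have sC: "subspace C" unfolding C_def by (rule subspace_orth_compl[OF B])
  have Cd: "\<And>c w. c \<in> C \<Longrightarrow> w \<in> Z \<Longrightarrow> B c w = 0 \<and> B w c = 0"
    unfolding C_def orth_compl_def using symB by auto
  show ?thesis unfolding C_def[symmetric]
  proof
    assume q0: "q_plus B C = 0"
    then have Cnp: "\<forall>x\<in>C. \<not> B x x > 0" using qp_zero_iff[OF B sym sC] by simp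
    show "\<forall>H. positive_plane B (k - 1) H \<and> Z_extendable B k Z H \<longrightarrow> Z_orth_extendable B k Z H"
    proof (intro allI impI)
      fix H assume hyp: "positive_plane B (k - 1) H \<and> Z_extendable B k Z H"
      then have sH: "subspace H" and dH: "dim H = k - 1" and pH: "pos_def_on B H"
        unfolding positive_plane_def by auto
      obtain z where z: "z \<in> Z" "positive_plane B k (line_ext H z)"
        using hyp unfolding Z_extendable_def by blast
      define P where "P = line_ext H z"
      have sP: "subspace P" and dP: "dim P = k" and pP: "pos_def_on B P"
        using z(2) unfolding P_def positive_plane_def by auto
      define A where "A = Z \<inter> orth_compl B H"
      have sA: "subspace A" unfolding A_def by (rule subspace_inter[OF sZ subspace_orth_compl[OF B]])
      show "Z_orth_extendable B k Z H"
      proof (rule ccontr)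
        assume nz: "\<not> Z_orth_extendable B k Z H"
        have Anp: "\<forall>x\<in>A. B x x \<le> 0"
        proof (intro ballI)
          fix x assume x: "x \<in> A"
          show "B x x \<le> 0"
          proof (rule ccontr)
            assume "\<not> B x x \<le> 0"
            then have "positive_plane B (dim H + 1) (line_ext H x)"
              using x by (intro pos_ext[OF B sym sH pH]) (auto simp: A_def orth_compl_def)
            then have "positive_plane B k (line_ext H x)" using dH k2 by simp
            then show False using nz x unfolding Z_orth_extendable_def A_def by blast
          qed
        qed
        have AC0: "A \<inter> C \<subseteq> {0}"
        proof
          fix r assume r: "r \<in> A \<inter> C"
          show "r \<in> {0}"
          proof (rule ccontr)
            assume rn: "r \<notin> {0}"
            have rZ: "r \<in> Z" and rC: "r \<in> C" and rH: "\<forall>h\<in>H. B r h = 0"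
              using r unfolding A_def orth_compl_def by auto
            have rr: "B r r = 0" using Cd[OF rC rZ] by simp
            have rP: "\<forall>p\<in>P. B p r = 0"
            proof
              fix p assume "p \<in> P"
              then obtain h c where "p = h + c *\<^sub>R z" "h \<in> H" unfolding P_def line_ext_def by auto
              then show "B p r = 0" using rH Cd[OF rC z(1)] symB by (simp add: bf)
            qed
            have rnP: "r \<notin> P" using rr rn pP unfolding pos_def_on_def by force
            have "dim (line_ext P r) = k + 1" using line_ext_props(4)[OF sP, of r] rnP dP by simp
            moreover have "dim (line_ext P r) \<le> k"
            proof (rule nonneg_dim[OF pe line_ext_props(1)[OF sP]], intro ballI)
              fix y assume "y \<in> line_ext P r"
              then obtain p c where y: "y = p + c *\<^sub>R r" "p \<in> P" unfolding line_ext_def by auto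
              have "B y y = B p p" unfolding y using rP y(2) rr symB[of r p] by (simp add: bf)
              moreover have "B p p \<ge> 0" using pP y(2) unfolding pos_def_on_def
                by (cases "p = 0") (auto simp: bf less_imp_le)
              ultimately show "B y y \<ge> 0" by simp
            qed
            ultimately show False by simp
          qed
        qed
        define S where "S = {x + y |x y. x \<in> A \<and> y \<in> C}"
        have sS: "subspace S" unfolding S_def by (rule subspace_sums[OF sA sC])
        have "\<forall>s\<in>S. B s s \<le> 0"
        proof
          fix s assume "s \<in> S"
          then obtain a c where s: "s = a + c" "a \<in> A" "c \<in> C" unfolding S_def by auto
          have aZ: "a \<in> Z" using s(2) unfolding A_def by auto
          have "B s s = B a a + B c c" unfolding s(1) using Cd[OF s(3) aZ] by (simp add: bf)
          then show "B s s \<le> 0" using Anp s(2) Cnp s(3) by force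
        qed
        then have dS: "dim S \<le> l" by (rule nonpos_dim[OF pe sS])
        have "dim (A \<inter> C) = 0" using AC0 dim_eq_0 by blast
        then have e: "dim S = dim A + dim C" using dim_sums_Int[OF sA sC] unfolding S_def by linarith
        have "dim Z \<le> dim (Z \<inter> orth_compl B H) + dim H" by (rule orth_compl_dim[OF B sH sZ])
        then have d1: "dim Z \<le> dim A + (k - 1)" using dH unfolding A_def by simp
        have "dim (UNIV::'a set) \<le> dim (UNIV \<inter> orth_compl B Z) + dim Z"
          by (rule orth_compl_dim[OF B sZ]) simp
        then have d2: "DIM('a) \<le> dim C + dim Z" unfolding C_def by simp
        show False using d1 d2 e dS kl k2 by linarith
      qed
    qed
  next
    assume ii: "\<forall>H. positive_plane B (k - 1) H \<and> Z_extendable B k Z H \<longrightarrow> Z_orth_extendable B k Z H"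
    show "q_plus B C = 0"
    proof (rule ccontr)
      assume "q_plus B C \<noteq> 0"
      then obtain p where pC: "p \<in> C" and pp: "B p p > 0" using qp_zero_iff[OF B sym sC] by auto
      obtain Zp where Zp: "subspace Zp" "Zp \<subseteq> Z" "pos_def_on B Zp" "dim Zp = q_plus B Z"
        using qp_wit[OF sZ] by blast
      have "\<not> Zp \<subseteq> {0}" using Zp(4) qZ dim_eq_0[of Zp] by auto
      then obtain z1 where z1: "z1 \<in> Zp" "z1 \<noteq> 0" by auto
      have z1Z: "z1 \<in> Z" using z1 Zp(2) by auto
      have z1z1: "B z1 z1 > 0" using z1 Zp(3) unfolding pos_def_on_def by auto
      have pz1: "B p z1 = 0" "B z1 p = 0" using Cd[OF pC z1Z] by auto
      define M where "M = line_ext Zp p"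
      have "positive_plane B (dim Zp + 1) M" unfolding M_def
        by (rule pos_ext[OF B sym Zp(1) Zp(3)]) (use pp Cd[OF pC] Zp(2) in auto)
      then have sM: "subspace M" and pM: "pos_def_on B M" unfolding positive_plane_def by auto
      obtain P where P: "subspace P" "pos_def_on B P" "M \<subseteq> P" "dim P = k"
        using extend_aux[OF pe, of "k - dim M"] sM pM by blast
      have ZpP: "Zp \<subseteq> P" using line_ext_props(2)[OF Zp(1), of p] P(3) unfolding M_def by auto
      have pP: "p \<in> P" using line_ext_props(3)[OF Zp(1), of p] P(3) unfolding M_def by auto
      have z1P: "z1 \<in> P" using ZpP z1 by auto
      define u where "u = p - z1"
      have uP: "u \<in> P" unfolding u_def using P(1) pP z1P by (simp add: subspace_diff)
      have uu: "B u u = B p p + B z1 z1" unfolding u_def using pz1 by (simp add: bf)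
      have uu0: "B u u > 0" using uu pp z1z1 by simp
      have z1u: "B z1 u = - B z1 z1" unfolding u_def using pz1 by (simp add: bf)
      define H where "H = P \<inter> {x. \<forall>t\<in>{u}. B x t = 0}"
      have sH: "subspace H" unfolding H_def by (rule subspace_inter[OF P(1) subspace_orth_set[OF B]])
      have HP: "H \<subseteq> P" unfolding H_def by auto
      have dec: "\<And>y. y \<in> P \<Longrightarrow> y - (B y u / B u u) *\<^sub>R u \<in> H"
      proof -
        fix y assume y: "y \<in> P"
        have "y - (B y u / B u u) *\<^sub>R u \<in> P" using P(1) y uP by (simp add: subspace_diff subspace_mul)
        moreover have "B (y - (B y u / B u u) *\<^sub>R u) u = 0" using uu0 by (simp add: bf)
        ultimately show "y - (B y u / B u u) *\<^sub>R u \<in> H" unfolding H_def by auto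
      qed
      have uH: "u \<notin> H" using uu0 unfolding H_def by auto
      have "line_ext H u = P"
      proof
        show "line_ext H u \<subseteq> P" by (rule line_ext_subset[OF sH P(1) HP uP])
        show "P \<subseteq> line_ext H u"
        proof
          fix y assume y: "y \<in> P"
          have "y = (y - (B y u / B u u) *\<^sub>R u) + (B y u / B u u) *\<^sub>R u" by simp
          then show "y \<in> line_ext H u" unfolding line_ext_def using dec[OF y] by blast
        qed
      qed
      then have "dim P = dim H + 1" using line_ext_props(4)[OF sH, of u] uH by simp
      then have dH: "dim H = k - 1" using P(4) by simp
      have pH: "pos_def_on B H" using P(2) HP unfolding pos_def_on_def by auto
      have z1H: "z1 \<notin> H" using z1u z1z1 unfolding H_def by auto
      have "dim (line_ext H z1) = k" using line_ext_props(4)[OF sH, of z1] z1H dH k2 by simp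
      moreover have "line_ext H z1 \<subseteq> P" by (rule line_ext_subset[OF sH P(1) HP z1P])
      ultimately have "positive_plane B k (line_ext H z1)"
        using line_ext_props(1)[OF sH] P(2) unfolding positive_plane_def pos_def_on_def by auto
      then have "Z_extendable B k Z H" unfolding Z_extendable_def using z1Z by blast
      moreover have "positive_plane B (k - 1) H" unfolding positive_plane_def using sH dH pH by simp
      ultimately have "Z_orth_extendable B k Z H" using ii by blast
      then obtain x where x: "x \<in> Z" "x \<in> orth_compl B H" "positive_plane B k (line_ext H x)"
        unfolding Z_orth_extendable_def by blast
      have x0: "x \<noteq> 0"
      proof
        assume "x = 0"
        then have "x \<in> H" using subspace_0[OF sH] by simp
        then have "dim (line_ext H x) = k - 1" using line_ext_props(4)[OF sH, of x] dH by simp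
        then show False using x(3) k2 unfolding positive_plane_def by simp
      qed
      have xx: "B x x > 0" using x(3) x0 line_ext_props(3)[OF sH, of x]
        unfolding positive_plane_def pos_def_on_def by auto
      have xH: "\<forall>h\<in>H. B x h = 0" using x(2) unfolding orth_compl_def by auto
      have xp: "B x p = 0" using Cd[OF pC x(1)] by simp
      have xy: "\<And>y. y \<in> P \<Longrightarrow> B x y = (B y u / B u u) * B x u"
      proof -
        fix y assume y: "y \<in> P"
        have "B x (y - (B y u / B u u) *\<^sub>R u) = 0" using xH dec[OF y] by blast
        then show "B x y = (B y u / B u u) * B x u" by (simp add: bf)
      qed
      have xu: "B x u = - B x z1" unfolding u_def using xp by (simp add: bf)
      have "B x z1 = (B z1 z1 / B u u) * B x z1" using xy[OF z1P] unfolding xu z1u by simp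
      moreover have "B z1 z1 / B u u \<noteq> 1" using uu pp uu0 by auto
      ultimately have xz1: "B x z1 = 0"
        by (metis mult_cancel_right1 mult.commute)
      have xZp: "\<forall>h\<in>Zp. B x h = 0" using xy ZpP xu xz1 by auto
      have "positive_plane B (dim Zp + 1) (line_ext Zp x)"
        by (rule pos_ext[OF B sym Zp(1) Zp(3) xZp xx])
      moreover have "line_ext Zp x \<subseteq> Z" by (rule line_ext_subset[OF Zp(1) sZ Zp(2) x(1)])
      ultimately have "dim Zp + 1 \<le> q_plus B Z" using qp_ge[of "line_ext Zp x" Z B]
        unfolding positive_plane_def by auto
      then show False using Zp(4) by simp
    qed
  qed
qed

end
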